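(* Let $(\mathbf{x}_t,\mathbf{z}_t,\mathbf{y}_t)_{t\ge0}$ be generated by generalized Bregman ADMM under the standing assumptions and Assumption 1, and let $(\mathbf{x}^*,\mathbf{z}^*,\mathbf{y}^* )$ be a KKT point. Let $\sigma=\min\{1,m^{\frac{2}{p}-1}\}$, let $0<\gamma<\frac{\alpha\sigma}{2}$, and suppose $\tau\le(\alpha\sigma-2\gamma)\rho$. Then for every $t\ge0$, $$R(t+1)\le D(\mathbf{w}^*,\mathbf{w}_t)-D(\mathbf{w}^*,\mathbf{w}_{t+1}).$$
   Context: Problem: $f:\mathbb{R}^{n_1}\to\mathbb{R}\cup\{+\infty\}$ and $g:\mathbb{R}^{n_2}\to\mathbb{R}\cup\{+\infty\}$; $\mathbf{A}\in\mathbb{R}^{m\times n_1}$, $\mathbf{B}\in\mathbb{R}^{m\times n_2}$, $\mathbf{c}\in\mathbb{R}^m$; $\mathcal{X}\subseteq\mathbb{R}^{n_1}$, $\mathcal{Z}\subseteq\mathbb{R}^{n_2}$ convex; the problem is $\min f(\mathbf{x})+g(\mathbf{z})$ s.t. $\mathbf{x}\in\mathcal{X},\mathbf{z}\in\mathcal{Z},\mathbf{A}\mathbf{x}+\mathbf{B}\mathbf{z}=\mathbf{c}$. For a continuously differentiable, strictly convex function $\psi$ on (the relative interior of) a convex set, $B_\psi(\mathbf{u},\mathbf{v})=\psi(\mathbf{u})-\psi(\mathbf{v})-\langle\nabla\psi(\mathbf{v}),\mathbf{u}-\mathbf{v}\rangle\ge 0$. Three such functions are fixed: $\phi$ (on a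 convex subset of $\mathbb{R}^m$), $\varphi_{\mathbf{x}}$ (on $\mathbb{R}^{n_1}$ or a convex subset), $\varphi_{\mathbf{z}}$ (on $\mathbb{R}^{n_2}$ or a convex subset). Generalized Bregman ADMM: given $(\mathbf{x}_0,\mathbf{z}_0,\mathbf{y}_0)$ and parameters $\rho>0,\tau>0,\rho_{\mathbf{x}}\ge0,\rho_{\mathbf{z}}\ge0$, for $t\ge0$: $\mathbf{x}_{t+1}=\arg\min_{\mathbf{x}\in\mathcal{X}} f(\mathbf{x})+\langle\mathbf{y}_t,\mathbf{A}\mathbf{x}+\mathbf{B}\mathbf{z}_t-\mathbf{c}\rangle+\rho B_\phi(\mathbf{c}-\mathbf{A}\mathbf{x},\mathbf{B}\mathbf{z}_t)+\rho_{\mathbf{x}}B_{\varphi_{\mathbf{x}}}(\mathbf{x},\mathbf{x}_t)$; $\mathbf{z}_{t+1}=\arg\min_{\mathbf{z}\in\mathcal{Z}} g(\mathbf{z})+\langle\mathbf{y}_t,\mathbf{A}\mathbf{x}_{t+1}+\mathbf{B}\mathbf{z}-\mathbf{c}\rangle+\rho B_\phi(\mathbf{B}\mathbf{z},\mathbf{c}-\mathbf{A}\mathbf{x}_{t+1})+\rho_{\mathbf{z}}B_{\varphi_{\mathbf{z}}}(\mathbf{z},\mathbf{z}_t)$; $\mathbf{y}_{t+1}=\mathbf{y}_t+\tau(\mathbf{A}\mathbf{x}_{t+1}+\mathbf{B}\mathbf{z}_{t+1}-\mathbf{c})$. Standing assumptions: the minimizers exist; all Bregman divergences are evaluated at points where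 they are defined; and the minimizers satisfy the first-order optimality conditions $-\mathbf{A}^T\{\mathbf{y}_t+\rho(\nabla\phi(\mathbf{B}\mathbf{z}_t)-\nabla\phi(\mathbf{c}-\mathbf{A}\mathbf{x}_{t+1}))\}-\rho_{\mathbf{x}}(\nabla\varphi_{\mathbf{x}}(\mathbf{x}_{t+1})-\nabla\varphi_{\mathbf{x}}(\mathbf{x}_t))\in\partial f(\mathbf{x}_{t+1})$ and $-\mathbf{B}^T\{\mathbf{y}_t+\rho(\nabla\phi(\mathbf{B}\mathbf{z}_{t+1})-\nabla\phi(\mathbf{c}-\mathbf{A}\mathbf{x}_{t+1}))\}-\rho_{\mathbf{z}}(\nabla\varphi_{\mathbf{z}}(\mathbf{z}_{t+1})-\nabla\varphi_{\mathbf{z}}(\mathbf{z}_t))\in\partial g(\mathbf{z}_{t+1})$. Assumption 1: (a) $f,g$ are closed, proper, convex; (b) an optimal solution exists; (c) $\phi$ is $\alpha$-strongly convex w.r.t. a $p$-norm ($p>0$), i.e. $B_\phi(\mathbf{u},\mathbf{v})\ge\frac{\alpha}{2}\|\mathbf{u}-\mathbf{v}\|_p^2$ with $\alpha>0$. A KKT point is $(\mathbf{x}^*,\mathbf{z}^*,\mathbf{y}^* )$ with $-\mathbf{A}^T\mathbf{y}^*\in\partial f(\mathbf{x}^* )$, $-\mathbf{B}^T\mathbf{y}^*\in\partial g(\mathbf{z}^* )$, $\mathbf{A}\mathbf{x}^*+\mathbf{B}\mathbf{z}^*=\mathbf{c}$. With $\mathbf{w}_t=(\mathbf{x}_t,\mathbf{z}_t,\mathbf{y}_t)$,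 $\mathbf{w}^*=(\mathbf{x}^*,\mathbf{z}^*,\mathbf{y}^* )$ and $\gamma>0$: $R(t+1)=\frac{\rho_{\mathbf{x}}}{\rho}B_{\varphi_{\mathbf{x}}}(\mathbf{x}_{t+1},\mathbf{x}_t)+\frac{\rho_{\mathbf{z}}}{\rho}B_{\varphi_{\mathbf{z}}}(\mathbf{z}_{t+1},\mathbf{z}_t)+B_\phi(\mathbf{c}-\mathbf{A}\mathbf{x}_{t+1},\mathbf{B}\mathbf{z}_t)+\gamma\|\mathbf{A}\mathbf{x}_{t+1}+\mathbf{B}\mathbf{z}_{t+1}-\mathbf{c}\|_2^2$, $D(\mathbf{w}^*,\mathbf{w}_t)=\frac{1}{2\tau\rho}\|\mathbf{y}^*-\mathbf{y}_t\|_2^2+B_\phi(\mathbf{B}\mathbf{z}^*,\mathbf{B}\mathbf{z}_t)+\frac{\rho_{\mathbf{x}}}{\rho}B_{\varphi_{\mathbf{x}}}(\mathbf{x}^*,\mathbf{x}_t)+\frac{\rho_{\mathbf{z}}}{\rho}B_{\varphi_{\mathbf{z}}}(\mathbf{z}^*,\mathbf{z}_t)$. *)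

theory Defs
  imports "HOL-Analysis.Analysis"
begin

text \<open>Extended-real-valued functions f : R^n -> R \<union> {+inf} are modelled as maps into ereal.\<close>

definition proper_fun :: "('a \<Rightarrow> ereal) \<Rightarrow> bool" where
  "proper_fun f \<longleftrightarrow> (\<forall>x. f x \<noteq> -\<infinity>) \<and> (\<exists>x. f x < \<infinity>)"

definition convex_efun :: "('a::real_vector \<Rightarrow> ereal) \<Rightarrow> bool" where
  "convex_efun f \<longleftrightarrow> (\<forall>x y. \<forall>\<theta>::real. 0 \<le> \<theta> \<and> \<theta> \<le> 1 \<longrightarrow>
      f (\<theta> *\<^sub>R x + (1 - \<theta>) *\<^sub>R y) \<le> ereal \<theta> * f x + ereal (1 - \<theta>) * f y)"

definition closed_efun :: "('a::topological_space \<Rightarrow> ereal) \<Rightarrow> bool" where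
  "closed_efun f \<longleftrightarrow> closed {(x, r::real). f x \<le> ereal r}"

definition subdiff :: "('a::real_inner \<Rightarrow> ereal) \<Rightarrow> 'a \<Rightarrow> 'a set" where
  "subdiff f x = {g. f x < \<infinity> \<and> (\<forall>u. f x + ereal (g \<bullet> (u - x)) \<le> f u)}"

definition strictly_convex_on :: "'a::real_vector set \<Rightarrow> ('a \<Rightarrow> real) \<Rightarrow> bool" where
  "strictly_convex_on S f \<longleftrightarrow> (\<forall>x\<in>S. \<forall>y\<in>S. \<forall>\<theta>::real. x \<noteq> y \<and> 0 < \<theta> \<and> \<theta> < 1 \<longrightarrow>
      f (\<theta> *\<^sub>R x + (1 - \<theta>) *\<^sub>R y) < \<theta> * f x + (1 - \<theta>) * f y)"

definition bregman_gen :: "'a::real_inner set \<Rightarrow> ('a \<Rightarrow> real) \<Rightarrow> ('a \<Rightarrow> 'a) \<Rightarrow> bool" where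
  "bregman_gen S psi gpsi \<longleftrightarrow> convex S \<and> strictly_convex_on S psi \<and>
     (\<forall>v\<in>S. (psi has_derivative (\<lambda>h. gpsi v \<bullet> h)) (at v within S)) \<and>
     continuous_on S gpsi"

definition breg :: "('a::real_inner \<Rightarrow> real) \<Rightarrow> ('a \<Rightarrow> 'a) \<Rightarrow> 'a \<Rightarrow> 'a \<Rightarrow> real" where
  "breg psi gpsi u v = psi u - psi v - gpsi v \<bullet> (u - v)"

definition pnorm :: "real \<Rightarrow> real^'m \<Rightarrow> real" where
  "pnorm p u = (\<Sum>i\<in>UNIV. \<bar>u $ i\<bar> powr p) powr (1 / p)"

end

theory Submission
  imports Defs
begin

lemma subdiff_mono:
  assumes pf: "proper_fun f" and g: "g \<in> subdiff f x" and h: "h \<in> subdiff f u"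
  shows "(g - h) \<bullet> (u - x) \<le> 0"
proof -
  from g have g1: "f x < \<infinity>" "f x + ereal (g \<bullet> (u - x)) \<le> f u" by (auto simp: subdiff_def)
  from h have h1: "f u < \<infinity>" "f u + ereal (h \<bullet> (x - u)) \<le> f x" by (auto simp: subdiff_def)
  from pf have "f x \<noteq> -\<infinity>" "f u \<noteq> -\<infinity>" by (auto simp: proper_fun_def)
  then obtain a b where a: "f x = ereal a" and b: "f u = ereal b"
    using g1(1) h1(1) by (metis ereal_cases less_ereal.simps(2) ereal_less_eq(1) less_irrefl)
  have "a + g \<bullet> (u - x) \<le> b" "b + h \<bullet> (x - u) \<le> a" using g1(2) h1(2) a b by auto
  moreover have "h \<bullet> (x - u) = - (h \<bullet> (u - x))" by (simp add: inner_diff_right)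
  ultimately show ?thesis by (simp add: inner_diff_left)
qed

lemma three_point:
  "(gp u1 - gp u0) \<bullet> (w - u1) = breg ps gp w u0 - breg ps gp w u1 - breg ps gp u1 u0"
  by (simp add: breg_def inner_diff_left inner_diff_right algebra_simps)

lemma four_point:
  "(gp bt - gp a) \<bullet> (a - bs) + (gp b1 - gp a) \<bullet> (bs - b1)
   = breg ps gp bs bt - breg ps gp bs b1 - breg ps gp a bt - breg ps gp b1 a"
  by (simp add: breg_def inner_diff_left inner_diff_right algebra_simps)

lemma lin1:
  fixes M :: "real^'n^'m"
  shows "((-(transpose M *v (v + k *\<^sub>R d)) - k' *\<^sub>R e) - (-(transpose M *v ys))) \<bullet> w
    = (ys - v) \<bullet> (M *v w) - k * (d \<bullet> (M *v w)) - k' * (e \<bullet> w)"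
proof -
  have "((-(transpose M *v (v + k *\<^sub>R d)) - k' *\<^sub>R e) - (-(transpose M *v ys)))
      = transpose M *v (ys - v - k *\<^sub>R d) - k' *\<^sub>R e"
    by (simp add: matrix_vector_mult_diff_distrib matrix_vector_right_distrib algebra_simps)
  then show ?thesis
    by (simp add: inner_diff_left dot_lmul_matrix inner_diff_left algebra_simps)
qed

lemma dual_sq:
  fixes ys yt r :: "'a::real_inner"
  shows "(norm (ys - (yt + tau *\<^sub>R r)))^2 = (norm (ys - yt))^2 - 2 * tau * ((ys - yt) \<bullet> r) + tau^2 * (norm r)^2"
  unfolding power2_norm_eq_inner
  by (simp add: inner_diff_left inner_diff_right inner_add_left inner_add_right inner_commute algebra_simps power2_eq_square)
lemma tangent_powr:
  fixes q mu x :: real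
  assumes q: "q \<ge> 1" and mu: "mu > 0" and x: "x \<ge> 0"
  shows "mu powr q + q * mu powr (q-1) * (x - mu) \<le> x powr q"
proof (cases "x = 0")
  case True
  have "mu powr q = mu * mu powr (q-1)" using mu
    by (simp add: powr_diff) 
  then have "mu powr q + q * mu powr (q-1) * (x - mu) = (1 - q) * mu powr q" using True
    by (simp add: algebra_simps)
  also have "\<dots> \<le> 0" using q by (simp add: mult_nonpos_nonneg)
  finally show ?thesis using True by simp
next
  case False
  then have xp: "x > 0" using x by simp
  have "q * mu powr (q-1) * (x - mu) \<le> x powr q - mu powr q"
    by (rule convex_on_imp_above_tangent[where A = "{0<..}"])
       (use q mu xp in \<open>auto intro!: derivative_eq_intros powr_convex simp: interior_open\<close>)
  then show ?thesis by simp
qed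

lemma pmean_s:
  fixes s :: "'i::finite \<Rightarrow> real"
  assumes s: "\<And>i. s i \<ge> 0" and q: "q > 0"
  shows "min 1 (real CARD('i) powr (1/q - 1)) * (\<Sum>i\<in>UNIV. s i) \<le> (\<Sum>i\<in>UNIV. s i powr q) powr (1/q)"
proof -
  define S where "S = (\<Sum>i\<in>UNIV. s i)"
  define m where "m = real CARD('i)"
  have m1: "m \<ge> 1" unfolding m_def by (simp add: Suc_leI)
  have S0: "S \<ge> 0" unfolding S_def using s by (simp add: sum_nonneg)
  have T0: "(\<Sum>i\<in>UNIV. s i powr q) \<ge> 0" by (simp add: sum_nonneg)
  show ?thesis
  proof (cases "S = 0")
    case True then show ?thesis by (simp add: S_def)
  next
    case False
    then have Sp: "S > 0" using S0 by simp
    show ?thesis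
    proof (cases "q \<le> 1")
      case True
      have "\<And>i. s i / S \<le> (s i / S) powr q"
      proof -
        fix i
        have le1: "s i / S \<le> 1" using s Sp unfolding S_def
          by (simp add: member_le_sum)
        have "(s i / S) powr 1 \<le> (s i / S) powr q"
          by (rule powr_mono') (use True le1 s Sp in auto)
        then show "s i / S \<le> (s i / S) powr q" using s Sp
          by (cases "s i = 0") auto
      qed
      then have "(\<Sum>i\<in>UNIV. s i / S) \<le> (\<Sum>i\<in>UNIV. (s i / S) powr q)"
        by (rule sum_mono)
      also have "(\<Sum>i\<in>UNIV. (s i / S) powr q) = (\<Sum>i\<in>UNIV. s i powr q) / S powr q"
        using s Sp by (simp add: powr_divide sum_divide_distrib)
      finally have "1 \<le> (\<Sum>i\<in>UNIV. s i powr q) / S powr q"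
        using Sp by (simp add: S_def flip: sum_divide_distrib)
      then have "S powr q \<le> (\<Sum>i\<in>UNIV. s i powr q)"
        using Sp by (simp add: field_simps)
      then have "(S powr q) powr (1/q) \<le> (\<Sum>i\<in>UNIV. s i powr q) powr (1/q)"
        using powr_mono2[of "1/q" "S powr q"] q Sp by simp
      then have "S \<le> (\<Sum>i\<in>UNIV. s i powr q) powr (1/q)"
        using q Sp by (simp add: powr_powr)
      moreover have "min 1 (m powr (1/q - 1)) * S \<le> S" using Sp
        by (simp add: mult_left_le_one_le min_le_iff_disj)
      ultimately show ?thesis by (simp add: S_def m_def)
    next
      case False
      then have q1: "q \<ge> 1" by simp
      define mu where "mu = S / m"
      have mup: "mu > 0" using Sp m1 by (simp add: mu_def)
      have "(\<Sum>i\<in>UNIV. mu powr q + q * mu powr (q-1) * (s i - mu)) \<le> (\<Sum>i\<in>UNIV. s i powr q)"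
        by (rule sum_mono) (rule tangent_powr[OF q1 mup s])
      moreover have "(\<Sum>i\<in>UNIV. mu powr q + q * mu powr (q-1) * (s i - mu)) = m * mu powr q"
        using m1 by (simp add: sum.distrib sum_subtractf m_def S_def[symmetric] mu_def
            flip: sum_distrib_left)
      ultimately have A: "m * mu powr q \<le> (\<Sum>i\<in>UNIV. s i powr q)" by simp
      have "(m * mu powr q) powr (1/q) = m powr (1/q) * mu"
        using m1 mup q by (simp add: powr_mult powr_powr)
      also have "\<dots> = m powr (1/q - 1) * S"
        using m1 by (simp add: mu_def powr_diff)
      finally have "m powr (1/q - 1) * S \<le> (\<Sum>i\<in>UNIV. s i powr q) powr (1/q)"
        using powr_mono2[OF _ _ A, of "1/q"] m1 mup q by simp
      moreover have "min 1 (m powr (1/q - 1)) * S \<le> m powr (1/q - 1) * S" using Sp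
        by (intro mult_right_mono) auto
      ultimately show ?thesis by (simp add: S_def m_def)
    qed
  qed
qed


lemma sq_powr: fixes T a :: real assumes "T \<ge> 0" shows "(T powr a)^2 = T powr (2*a)"
proof (cases "T = 0")
  case True then show ?thesis by simp
next
  case False then show ?thesis by (simp add: powr_power)
qed

lemma abs_powr_sq: fixes a p :: real assumes "p > 0" shows "\<bar>a\<bar> powr p = (a^2) powr (p/2)"
proof (cases "a = 0")
  case True then show ?thesis using assms by simp
next
  case False
  have "\<bar>a\<bar> powr 2 = \<bar>a\<bar>^2" using False by (subst powr_realpow'[symmetric]) auto
  then have e: "a^2 = \<bar>a\<bar> powr 2" by simp
  have "(\<bar>a\<bar> powr 2) powr (p/2) = \<bar>a\<bar> powr p" unfolding powr_powr by simp
  then show ?thesis by (simp only: e)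
qed

lemma pnorm_bound:
  fixes r :: "real^'m" assumes p: "p > 0"
  shows "min 1 (real CARD('m) powr (2/p - 1)) * (norm r)^2 \<le> (pnorm p r)^2"
proof -
  have e1: "(norm r)^2 = (\<Sum>i\<in>UNIV. (r$i)^2)"
    unfolding dot_square_norm[symmetric] inner_vec_def by (simp add: power2_eq_square)
  have "(pnorm p r)^2 = (\<Sum>i\<in>UNIV. \<bar>r$i\<bar> powr p) powr (2*(1/p))"
    unfolding pnorm_def by (rule sq_powr) (simp add: sum_nonneg)
  also have "\<dots> = (\<Sum>i\<in>UNIV. ((r$i)^2) powr (p/2)) powr (1/(p/2))"
  proof -
    have "(\<Sum>i\<in>UNIV. \<bar>r$i\<bar> powr p) = (\<Sum>i\<in>UNIV. ((r$i)^2) powr (p/2))"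
      by (rule sum.cong[OF refl]) (rule abs_powr_sq[OF p])
    moreover have "2*(1/p) = 1/(p/2)" by simp
    ultimately show ?thesis by (simp only:)
  qed
  finally have e2: "(pnorm p r)^2 = (\<Sum>i\<in>UNIV. ((r$i)^2) powr (p/2)) powr (1/(p/2))" .
  have e3: "2/p - 1 = 1/(p/2) - 1" by simp
  have "min 1 (real CARD('m) powr (1/(p/2) - 1)) * (\<Sum>i\<in>UNIV. (r$i)^2) \<le> (\<Sum>i\<in>UNIV. ((r$i)^2) powr (p/2)) powr (1/(p/2))"
    by (rule pmean_s) (use p in auto)
  then show ?thesis unfolding e1 e2 e3 .
qed

theorem lemma2:
  fixes f :: "real^'n1 \<Rightarrow> ereal" and g :: "real^'n2 \<Rightarrow> ereal"
    and A :: "real^'n1^'m" and B :: "real^'n2^'m" and c :: "real^'m"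
    and X :: "(real^'n1) set" and Z :: "(real^'n2) set"
    and phi :: "real^'m \<Rightarrow> real" and gphi :: "real^'m \<Rightarrow> real^'m" and Sphi :: "(real^'m) set"
    and phix :: "real^'n1 \<Rightarrow> real" and gx :: "real^'n1 \<Rightarrow> real^'n1" and Sx :: "(real^'n1) set"
    and phiz :: "real^'n2 \<Rightarrow> real" and gz :: "real^'n2 \<Rightarrow> real^'n2" and Sz :: "(real^'n2) set"
    and x :: "nat \<Rightarrow> real^'n1" and z :: "nat \<Rightarrow> real^'n2" and y :: "nat \<Rightarrow> real^'m"
    and xs :: "real^'n1" and zs :: "real^'n2" and ys :: "real^'m"
    and rho tau rhox rhoz alpha p gamma :: real
  assumes convX: "convex X" and convZ: "convex Z"
    and gen_phi: "bregman_gen Sphi phi gphi"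
    and gen_phix: "bregman_gen Sx phix gx"
    and gen_phiz: "bregman_gen Sz phiz gz"
    and params: "rho > 0" "tau > 0" "rhox \<ge> 0" "rhoz \<ge> 0"
    \<comment> \<open>the iterates: x-update is a minimizer\<close>
    and x_in: "\<And>t. x (Suc t) \<in> X"
    and x_min: "\<And>t u. u \<in> X \<Longrightarrow> c - A *v u \<in> Sphi \<Longrightarrow> u \<in> Sx \<Longrightarrow>
        f (x (Suc t)) + ereal (y t \<bullet> (A *v x (Suc t) + B *v z t - c)
            + rho * breg phi gphi (c - A *v x (Suc t)) (B *v z t)
            + rhox * breg phix gx (x (Suc t)) (x t))
        \<le> f u + ereal (y t \<bullet> (A *v u + B *v z t - c)
            + rho * breg phi gphi (c - A *v u) (B *v z t)
            + rhox * breg phix gx u (x t))"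
    \<comment> \<open>z-update is a minimizer\<close>
    and z_in: "\<And>t. z (Suc t) \<in> Z"
    and z_min: "\<And>t v. v \<in> Z \<Longrightarrow> B *v v \<in> Sphi \<Longrightarrow> v \<in> Sz \<Longrightarrow>
        g (z (Suc t)) + ereal (y t \<bullet> (A *v x (Suc t) + B *v z (Suc t) - c)
            + rho * breg phi gphi (B *v z (Suc t)) (c - A *v x (Suc t))
            + rhoz * breg phiz gz (z (Suc t)) (z t))
        \<le> g v + ereal (y t \<bullet> (A *v x (Suc t) + B *v v - c)
            + rho * breg phi gphi (B *v v) (c - A *v x (Suc t))
            + rhoz * breg phiz gz v (z t))"
    \<comment> \<open>dual update\<close>
    and y_upd: "\<And>t. y (Suc t) = y t + tau *\<^sub>R (A *v x (Suc t) + B *v z (Suc t) - c)"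
    \<comment> \<open>all Bregman divergences are evaluated where defined\<close>
    and dom_phi: "\<And>t. c - A *v x (Suc t) \<in> Sphi" "\<And>t. B *v z t \<in> Sphi" "B *v zs \<in> Sphi"
    and dom_x: "\<And>t. x t \<in> Sx" "xs \<in> Sx"
    and dom_z: "\<And>t. z t \<in> Sz" "zs \<in> Sz"
    \<comment> \<open>first-order optimality conditions of the subproblems\<close>
    and opt_x: "\<And>t. - (transpose A *v (y t + rho *\<^sub>R (gphi (B *v z t) - gphi (c - A *v x (Suc t)))))
        - rhox *\<^sub>R (gx (x (Suc t)) - gx (x t)) \<in> subdiff f (x (Suc t))"
    and opt_z: "\<And>t. - (transpose B *v (y t + rho *\<^sub>R (gphi (B *v z (Suc t)) - gphi (c - A *v x (Suc t)))))
        - rhoz *\<^sub>R (gz (z (Suc t)) - gz (z t)) \<in> subdiff g (z (Suc t))"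
    \<comment> \<open>Assumption 1\<close>
    and f_cpc: "closed_efun f" "proper_fun f" "convex_efun f"
    and g_cpc: "closed_efun g" "proper_fun g" "convex_efun g"
    and opt_exists: "\<exists>xo zo. xo \<in> X \<and> zo \<in> Z \<and> A *v xo + B *v zo = c \<and>
        (\<forall>x' z'. x' \<in> X \<and> z' \<in> Z \<and> A *v x' + B *v z' = c \<longrightarrow> f xo + g zo \<le> f x' + g z')"
    and p_pos: "p > 0" and alpha_pos: "alpha > 0"
    and strong: "\<And>u v. u \<in> Sphi \<Longrightarrow> v \<in> Sphi \<Longrightarrow>
        breg phi gphi u v \<ge> alpha / 2 * (pnorm p (u - v))\<^sup>2"
    \<comment> \<open>KKT point\<close>
    and kkt: "- (transpose A *v ys) \<in> subdiff f xs" "- (transpose B *v ys) \<in> subdiff g zs"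
        "A *v xs + B *v zs = c"
    \<comment> \<open>step-size conditions\<close>
    and gamma_pos: "gamma > 0"
    and gamma_lt: "gamma < alpha * min 1 (real CARD('m) powr (2 / p - 1)) / 2"
    and tau_le: "tau \<le> (alpha * min 1 (real CARD('m) powr (2 / p - 1)) - 2 * gamma) * rho"
  shows "rhox / rho * breg phix gx (x (Suc t)) (x t) + rhoz / rho * breg phiz gz (z (Suc t)) (z t)
           + breg phi gphi (c - A *v x (Suc t)) (B *v z t)
           + gamma * (norm (A *v x (Suc t) + B *v z (Suc t) - c))\<^sup>2
         \<le> (1 / (2 * tau * rho) * (norm (ys - y t))\<^sup>2 + breg phi gphi (B *v zs) (B *v z t)
              + rhox / rho * breg phix gx xs (x t) + rhoz / rho * breg phiz gz zs (z t))
           - (1 / (2 * tau * rho) * (norm (ys - y (Suc t)))\<^sup>2 + breg phi gphi (B *v zs) (B *v z (Suc t))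
              + rhox / rho * breg phix gx xs (x (Suc t)) + rhoz / rho * breg phiz gz zs (z (Suc t)))"
  proof -
  define a where "a = c - A *v x (Suc t)"
  define bt where "bt = B *v z t"
  define b1 where "b1 = B *v z (Suc t)"
  define bs where "bs = B *v zs"
  define r where "r = A *v x (Suc t) + B *v z (Suc t) - c"
  define \<sigma> where "\<sigma> = min 1 (real CARD('m) powr (2 / p - 1))"
  define N0 where "N0 = (norm (ys - y t))\<^sup>2"
  define N1 where "N1 = (norm (ys - y (Suc t)))\<^sup>2"
  define R where "R = (norm r)\<^sup>2"
  define Q where "Q = (ys - y t) \<bullet> r"
  have rba: "r = b1 - a" by (simp add: r_def b1_def a_def algebra_simps)
  have Ad: "A *v (xs - x (Suc t)) = a - bs"
    using kkt(3) by (simp add: a_def bs_def matrix_vector_mult_diff_distrib algebra_simps)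
  have Bd: "B *v (zs - z (Suc t)) = bs - b1"
    by (simp add: b1_def bs_def matrix_vector_mult_diff_distrib)
  have E1: "(ys - y t) \<bullet> (a - bs) - rho * ((gphi bt - gphi a) \<bullet> (a - bs))
      - rhox * ((gx (x (Suc t)) - gx (x t)) \<bullet> (xs - x (Suc t))) \<le> 0"
    using subdiff_mono[OF f_cpc(2) opt_x[of t] kkt(1)]
    unfolding lin1 Ad a_def bt_def .
  have E2: "(ys - y t) \<bullet> (bs - b1) - rho * ((gphi b1 - gphi a) \<bullet> (bs - b1))
      - rhoz * ((gz (z (Suc t)) - gz (z t)) \<bullet> (zs - z (Suc t))) \<le> 0"
    using subdiff_mono[OF g_cpc(2) opt_z[of t] kkt(2)]
    unfolding lin1 Bd a_def b1_def .
  have Qd: "(ys - y t) \<bullet> (a - bs) + (ys - y t) \<bullet> (bs - b1) = - Q"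
    unfolding Q_def rba by (simp add: inner_diff_right)
  have F: "rho * ((gphi bt - gphi a) \<bullet> (a - bs)) + rho * ((gphi b1 - gphi a) \<bullet> (bs - b1))
     = rho * breg phi gphi bs bt - rho * breg phi gphi bs b1 - rho * breg phi gphi a bt - rho * breg phi gphi b1 a"
  proof -
    have "rho * ((gphi bt - gphi a) \<bullet> (a - bs) + (gphi b1 - gphi a) \<bullet> (bs - b1))
       = rho * (breg phi gphi bs bt - breg phi gphi bs b1 - breg phi gphi a bt - breg phi gphi b1 a)"
      using four_point[of gphi bt a bs b1 phi] by simp
    then show ?thesis by (simp add: ring_distribs)
  qed
  have TX: "rhox * ((gx (x (Suc t)) - gx (x t)) \<bullet> (xs - x (Suc t)))
     = rhox * breg phix gx xs (x t) - rhox * breg phix gx xs (x (Suc t)) - rhox * breg phix gx (x (Suc t)) (x t)"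
    unfolding three_point[of gx "x (Suc t)" "x t" xs phix] by (simp add: ring_distribs)
  have TZ: "rhoz * ((gz (z (Suc t)) - gz (z t)) \<bullet> (zs - z (Suc t)))
     = rhoz * breg phiz gz zs (z t) - rhoz * breg phiz gz zs (z (Suc t)) - rhoz * breg phiz gz (z (Suc t)) (z t)"
    unfolding three_point[of gz "z (Suc t)" "z t" zs phiz] by (simp add: ring_distribs)
  have N1d: "N1 = N0 - 2 * tau * Q + tau^2 * R"
    unfolding N1_def N0_def Q_def R_def y_upd r_def by (rule dual_sq)
  have Qe: "Q = (N0 - N1) / (2 * tau) + tau / 2 * R"
    using N1d params(2) by (simp add: field_simps power2_eq_square)
  have R0: "R \<ge> 0" by (simp add: R_def)
  have sig: "\<sigma> * R \<le> (pnorm p r)\<^sup>2" unfolding \<sigma>_def R_def by (rule pnorm_bound[OF p_pos])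
  have st: "breg phi gphi b1 a \<ge> alpha / 2 * (pnorm p r)\<^sup>2"
    using strong[of b1 a] dom_phi(2)[of "Suc t"] dom_phi(1)[of t] unfolding rba b1_def a_def by simp
  have S1: "breg phi gphi b1 a \<ge> alpha * \<sigma> / 2 * R"
  proof -
    have "alpha / 2 * (\<sigma> * R) \<le> alpha / 2 * (pnorm p r)\<^sup>2"
      using sig alpha_pos by (intro mult_left_mono) auto
    then show ?thesis using st by (simp add: algebra_simps)
  qed
  have S2: "rho * gamma * R + tau / 2 * R \<le> rho * breg phi gphi b1 a"
  proof -
    have "tau * R \<le> (alpha * \<sigma> - 2 * gamma) * rho * R"
      using tau_le R0 unfolding \<sigma>_def by (intro mult_right_mono) auto
    moreover have "rho * (alpha * \<sigma> / 2 * R) \<le> rho * breg phi gphi b1 a"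
      using S1 params(1) by (intro mult_left_mono) auto
    ultimately show ?thesis by (simp add: algebra_simps)
  qed
  have M: "rhox * breg phix gx (x (Suc t)) (x t) + rhoz * breg phiz gz (z (Suc t)) (z t)
      + rho * breg phi gphi a bt + rho * gamma * R
    \<le> (N0 - N1) / (2 * tau) + rho * breg phi gphi bs bt - rho * breg phi gphi bs b1
      + rhox * breg phix gx xs (x t) - rhox * breg phix gx xs (x (Suc t))
      + rhoz * breg phiz gz zs (z t) - rhoz * breg phiz gz zs (z (Suc t))"
    using E1 E2 Qd F TX TZ Qe S2 by linarith
  have "rhox / rho * breg phix gx (x (Suc t)) (x t) + rhoz / rho * breg phiz gz (z (Suc t)) (z t)
           + breg phi gphi a bt + gamma * R
      = (rhox * breg phix gx (x (Suc t)) (x t) + rhoz * breg phiz gz (z (Suc t)) (z t)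
      + rho * breg phi gphi a bt + rho * gamma * R) / rho"
    using params(1) by (simp add: field_simps)
  also have "\<dots> \<le> ((N0 - N1) / (2 * tau) + rho * breg phi gphi bs bt - rho * breg phi gphi bs b1
      + rhox * breg phix gx xs (x t) - rhox * breg phix gx xs (x (Suc t))
      + rhoz * breg phiz gz zs (z t) - rhoz * breg phiz gz zs (z (Suc t))) / rho"
    using M params(1) by (simp add: divide_right_mono)
  also have "\<dots> = (1 / (2 * tau * rho) * N0 + breg phi gphi bs bt
              + rhox / rho * breg phix gx xs (x t) + rhoz / rho * breg phiz gz zs (z t))
           - (1 / (2 * tau * rho) * N1 + breg phi gphi bs b1
              + rhox / rho * breg phix gx xs (x (Suc t)) + rhoz / rho * breg phiz gz zs (z (Suc t)))"
    using params(1,2) by (simp add: field_simps)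
  finally show ?thesis
    unfolding a_def bt_def b1_def bs_def R_def r_def N0_def N1_def .
qed

end
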